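(* $\mathcal{F}$ is strongly $\mathfrak{c}$-algebrable: there is a set $Z=\{z_\alpha:\alpha<\mathfrak{c}\}$ of real functions on $[0,1]$ such that for every nonzero polynomial $P$ with real coefficients and no constant term and every distinct $z_{\alpha_1},\dots,z_{\alpha_n}\in Z$, the function $P(z_{\alpha_1},\dots,z_{\alpha_n})$ is nonzero, and every such function belongs to $\mathcal{F}$.
   Context: $\mathcal{F}$ is the set of real-valued functions of bounded variation on $[0,1]$ whose set of jump discontinuities is dense in $[0,1]$. Operations on functions are pointwise; $\mathfrak{c}$ is the cardinality of the continuum. *)

theory Defs
  imports "HOL-Analysis.Analysis"
begin

definition bounded_variation_on :: "real \<Rightarrow> real \<Rightarrow> (real \<Rightarrow> real) \<Rightarrow> bool" where
  "bounded_variation_on a b f \<longleftrightarrow>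
     (\<exists>B. \<forall>(n::nat) (t::nat \<Rightarrow> real).
        t 0 = a \<and> t n = b \<and> (\<forall>i<n. t i \<le> t (Suc i)) \<longrightarrow>
        (\<Sum>i<n. \<bar>f (t (Suc i)) - f (t i)\<bar>) \<le> B)"

definition jump_discontinuity :: "(real \<Rightarrow> real) \<Rightarrow> real \<Rightarrow> bool" where
  "jump_discontinuity f x \<longleftrightarrow>
     x \<in> {0..1} \<and> \<not> continuous (at x within {0..1}) f \<and>
     (0 < x \<longrightarrow> (\<exists>l. (f \<longlongrightarrow> l) (at_left x))) \<and>
     (x < 1 \<longrightarrow> (\<exists>r. (f \<longlongrightarrow> r) (at_right x)))"

definition classF :: "(real \<Rightarrow> real) set" where
  "classF = {f. bounded_variation_on 0 1 f \<and>
                {0..1} \<subseteq> closure {x. jump_discontinuity f x}}"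

text \<open>Polynomial in n variables with real coefficients: a finitely supported
  coefficient function on exponent vectors (nat \<Rightarrow> nat) whose support only
  uses variables 0..n-1.\<close>
definition is_poly :: "nat \<Rightarrow> ((nat \<Rightarrow> nat) \<Rightarrow> real) \<Rightarrow> bool" where
  "is_poly n c \<longleftrightarrow> finite {m. c m \<noteq> 0} \<and> (\<forall>m. c m \<noteq> 0 \<longrightarrow> (\<forall>i\<ge>n. m i = 0))"

definition poly_eval :: "nat \<Rightarrow> ((nat \<Rightarrow> nat) \<Rightarrow> real) \<Rightarrow> (nat \<Rightarrow> real) \<Rightarrow> real" where
  "poly_eval n c y = (\<Sum>m\<in>{m. c m \<noteq> 0}. c m * (\<Prod>i<n. y i ^ m i))"

end

theory Submission
  imports Defs "HOL-Real_Asymp.Real_Asymp"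
begin


lemma powr_neg_top: "r > 0 \<Longrightarrow> filterlim (\<lambda>t::real. t powr (-r)) at_top (at_right 0)"
  by real_asymp
lemma powr_pos_zero: "r > 0 \<Longrightarrow> ((\<lambda>t::real. t powr r) \<longlongrightarrow> 0) (at_right 0)"
  by real_asymp

lemma sum_to_top:
  fixes d r :: "nat \<Rightarrow> real"
  assumes A: "finite A" and j: "j \<in> A" and dj: "d j > 0" and rj: "r j > 0"
    and lt: "\<And>i. i \<in> A \<Longrightarrow> i \<noteq> j \<Longrightarrow> d i \<noteq> 0 \<Longrightarrow> r i < r j"
  shows "filterlim (\<lambda>t. \<Sum>i\<in>A. d i * t powr (-r i)) at_top (at_right 0)"
proof -
  define h where "h t = d j + (\<Sum>i\<in>A-{j}. d i * t powr (r j - r i))" for t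
  have "((\<lambda>t. \<Sum>i\<in>A-{j}. d i * t powr (r j - r i)) \<longlongrightarrow> (\<Sum>i\<in>A-{j}. 0)) (at_right 0)"
  proof (rule tendsto_sum)
    fix i assume i: "i \<in> A - {j}"
    show "((\<lambda>t. d i * t powr (r j - r i)) \<longlongrightarrow> 0) (at_right 0)"
    proof (cases "d i = 0")
      case True then show ?thesis by simp
    next
      case False
      then have "r j - r i > 0" using lt i by auto
      from tendsto_mult[OF tendsto_const powr_pos_zero[OF this]] show ?thesis by simp
    qed
  qed
  then have "(h \<longlongrightarrow> d j + 0) (at_right 0)" unfolding h_def by (intro tendsto_add) auto
  then have "filterlim (\<lambda>t. h t * t powr (-r j)) at_top (at_right 0)"
    using filterlim_tendsto_pos_mult_at_top[OF _ dj powr_neg_top[OF rj]] by simp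
  moreover have "eventually (\<lambda>t. h t * t powr (-r j) = (\<Sum>i\<in>A. d i * t powr (-r i))) (at_right 0)"
  proof -
    have "eventually (\<lambda>t::real. t > 0) (at_right 0)" by (simp add: eventually_at_right_less)
    then show ?thesis
    proof (rule eventually_mono)
      fix t :: real assume t: "t > 0"
      have "h t * t powr (-r j) = d j * t powr (-r j) + (\<Sum>i\<in>A-{j}. d i * t powr (r j - r i) * t powr (-r j))"
        unfolding h_def by (simp only: distrib_right sum_distrib_right)
      also have "(\<Sum>i\<in>A-{j}. d i * t powr (r j - r i) * t powr (-r j)) = (\<Sum>i\<in>A-{j}. d i * t powr (-r i))"
      proof (rule sum.cong)
        fix i
        have "t powr (r j - r i) * t powr (-r j) = t powr (-r i)" by (simp add: powr_add[symmetric])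
        then show "d i * t powr (r j - r i) * t powr (-r j) = d i * t powr (-r i)" by (simp only: mult.assoc)
      qed (rule refl)
      also have "d j * t powr (-r j) + \<dots> = (\<Sum>i\<in>A. d i * t powr (-r i))"
        using sum.remove[OF A j, of "\<lambda>i. d i * t powr (-r i)"] by simp
      finally show "h t * t powr (-r j) = (\<Sum>i\<in>A. d i * t powr (-r i))" .
    qed
  qed
  ultimately show ?thesis by (rule filterlim_cong[OF refl refl, THEN iffD1, rotated])
qed

lemma sum_dichotomy:
  fixes d r :: "nat \<Rightarrow> real"
  assumes ex: "\<exists>i<n. d i \<noteq> 0" and inj: "inj_on r {..<n}" and pos: "\<And>i. r i > 0"
  shows "filterlim (\<lambda>t. \<Sum>i<n. d i * t powr (-r i)) at_top (at_right 0) \<or>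
         filterlim (\<lambda>t. \<Sum>i<n. (- d i) * t powr (-r i)) at_top (at_right 0)"
proof -
  define A where "A = {i. i<n \<and> d i \<noteq> 0}"
  have fA: "finite A" "A \<noteq> {}" using ex by (auto simp: A_def)
  have "Max (r ` A) \<in> r ` A" using fA by (intro Max_in) auto
  then obtain j where j: "j \<in> A" "r j = Max (r ` A)" by (metis imageE)
  have lt: "r i < r j" if "i \<in> {..<n}" "i \<noteq> j" "d i \<noteq> 0" for i
  proof -
    have "i \<in> A" using that by (auto simp: A_def)
    then have "r i \<le> r j" using j fA by auto
    moreover have "r i \<noteq> r j" using inj that j by (auto simp: A_def inj_on_def)
    ultimately show ?thesis by simp
  qed
  have jn: "j \<in> {..<n}" "d j \<noteq> 0" using j by (auto simp: A_def)
  show ?thesis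
  proof (cases "d j > 0")
    case True
    then show ?thesis using sum_to_top[of "{..<n}" j d r] jn lt pos by auto
  next
    case False
    then have "- d j > 0" using jn by simp
    then show ?thesis using sum_to_top[of "{..<n}" j "\<lambda>i. - d i" r] jn lt pos by auto
  qed
qed

lemma finite_min_rel:
  assumes "finite S" "S \<noteq> {}"
    and tot: "\<And>a b. a \<in> S \<Longrightarrow> b \<in> S \<Longrightarrow> a \<noteq> b \<Longrightarrow> T a b \<or> T b a"
    and tr: "\<And>a b c. T a b \<Longrightarrow> T b c \<Longrightarrow> T a c"
  shows "\<exists>m\<in>S. \<forall>m'\<in>S-{m}. T m m'"
  using assms(1,2,3)
proof (induction S rule: finite_ne_induct)
  case (singleton x) then show ?case by auto
next
  case (insert x F)
  then obtain m where m: "m \<in> F" "\<forall>m'\<in>F-{m}. T m m'" by auto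
  have "x \<noteq> m" using m insert by auto
  then have "T m x \<or> T x m" using insert m by auto
  then show ?case
  proof
    assume "T m x" then show ?thesis using m by auto
  next
    assume "T x m" then show ?thesis using m tr by (intro bexI[of _ x]) auto
  qed
qed

definition Eexp :: "nat \<Rightarrow> (nat \<Rightarrow> real) \<Rightarrow> (nat \<Rightarrow> nat) \<Rightarrow> real \<Rightarrow> real" where
  "Eexp n r m t = (\<Sum>i<n. real (m i) * t powr (-r i))"

lemma nonvanish:
  fixes S :: "(nat \<Rightarrow> nat) set" and c :: "(nat \<Rightarrow> nat) \<Rightarrow> real"
  assumes fS: "finite S" "S \<noteq> {}" and cS: "\<And>m. m \<in> S \<Longrightarrow> c m \<noteq> 0"
    and supp: "\<And>m i. m \<in> S \<Longrightarrow> i \<ge> n \<Longrightarrow> m i = 0"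
    and inj: "inj_on r {..<n}" and pos: "\<And>i. r i > 0"
  shows "eventually (\<lambda>t. (\<Sum>m\<in>S. c m * exp (- Eexp n r m t)) \<noteq> 0) (at_right 0)"
proof -
  define T where "T a b \<longleftrightarrow> filterlim (\<lambda>t. Eexp n r b t - Eexp n r a t) at_top (at_right 0)" for a b
  have diff: "Eexp n r b t - Eexp n r a t = (\<Sum>i<n. (real (b i) - real (a i)) * t powr (-r i))" for a b t
    unfolding Eexp_def sum_subtractf[symmetric] by (simp add: left_diff_distrib)
  have tot: "T a b \<or> T b a" if "a \<in> S" "b \<in> S" "a \<noteq> b" for a b
  proof -
    have "\<exists>i<n. a i \<noteq> b i"
    proof (rule ccontr)
      assume "\<not> ?thesis"
      then have "a i = b i" for i using supp[OF that(1), of i] supp[OF that(2), of i] by (cases "i < n") auto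
      then show False using that(3) by auto
    qed
    then have ex: "\<exists>i<n. real (b i) - real (a i) \<noteq> 0" by auto
    have e1: "(\<lambda>t. \<Sum>i<n. (real (b i) - real (a i)) * t powr (-r i)) = (\<lambda>t. Eexp n r b t - Eexp n r a t)"
      by (simp add: diff)
    have e2: "(\<lambda>t. \<Sum>i<n. (- (real (b i) - real (a i))) * t powr (-r i)) = (\<lambda>t. Eexp n r a t - Eexp n r b t)"
      by (simp add: diff)
    from sum_dichotomy[OF ex inj pos]
    have "filterlim (\<lambda>t. Eexp n r b t - Eexp n r a t) at_top (at_right 0) \<or>
          filterlim (\<lambda>t. Eexp n r a t - Eexp n r b t) at_top (at_right 0)"
      unfolding e1 e2 .
    then show ?thesis unfolding T_def .
  qed
  have tr: "T a c'" if "T a b" "T b c'" for a b c'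
  proof -
    have "filterlim (\<lambda>t. (Eexp n r c' t - Eexp n r b t) + (Eexp n r b t - Eexp n r a t)) at_top (at_right 0)"
      using that(2,1) unfolding T_def by (rule filterlim_at_top_add_at_top)
    then show ?thesis unfolding T_def by simp
  qed
  have "\<exists>m\<in>S. \<forall>m'\<in>S-{m}. T m m'"
    by (rule finite_min_rel[OF fS, where T=T]) (fact tot, fact tr)
  then obtain ms where ms: "ms \<in> S" "\<forall>m'\<in>S-{ms}. T ms m'" by blast
  define E where "E = Eexp n r"
  have eq: "(\<Sum>m\<in>S. c m * exp (- E m t)) * exp (E ms t) =
      c ms + (\<Sum>m\<in>S-{ms}. c m * exp (- (E m t - E ms t)))" for t
  proof -
    have "(\<Sum>m\<in>S. c m * exp (- E m t)) * exp (E ms t) = (\<Sum>m\<in>S. c m * exp (- (E m t - E ms t)))"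
      unfolding sum_distrib_right
    proof (rule sum.cong)
      fix m
      have "exp (- (E m t - E ms t)) = exp (- E m t) * exp (E ms t)"
        by (metis exp_add minus_diff_eq uminus_add_conv_diff add.commute)
      then show "c m * exp (- E m t) * exp (E ms t) = c m * exp (- (E m t - E ms t))" by simp
    qed simp
    also have "\<dots> = c ms + (\<Sum>m\<in>S-{ms}. c m * exp (- (E m t - E ms t)))"
      using sum.remove[OF fS(1) ms(1), of "\<lambda>m. c m * exp (- (E m t - E ms t))"] by simp
    finally show ?thesis .
  qed
  have "((\<lambda>t. \<Sum>m\<in>S-{ms}. c m * exp (- (E m t - E ms t))) \<longlongrightarrow> (\<Sum>m\<in>S-{ms}. c m * 0)) (at_right 0)"
  proof (rule tendsto_sum)
    fix m assume m: "m \<in> S - {ms}"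
    then have "filterlim (\<lambda>t. E m t - E ms t) at_top (at_right 0)" using ms m unfolding T_def E_def by blast
    then have "filterlim (\<lambda>t. - (E m t - E ms t)) at_bot (at_right 0)" by (simp add: filterlim_uminus_at_top)
    from filterlim_compose[OF exp_at_bot this]
    have "((\<lambda>t. exp (- (E m t - E ms t))) \<longlongrightarrow> 0) (at_right 0)" .
    from tendsto_mult[OF tendsto_const this, of "c m"]
    show "((\<lambda>t. c m * exp (- (E m t - E ms t))) \<longlongrightarrow> c m * 0) (at_right 0)" .
  qed
  note lim = this
  have "((\<lambda>t. c ms + (\<Sum>m\<in>S-{ms}. c m * exp (- (E m t - E ms t)))) \<longlongrightarrow> c ms + 0) (at_right 0)"
    using tendsto_add[OF tendsto_const lim, of "c ms"] by simp
  then have "eventually (\<lambda>t. c ms + (\<Sum>m\<in>S-{ms}. c m * exp (- (E m t - E ms t))) \<noteq> 0) (at_right 0)"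
    by (rule tendsto_imp_eventually_ne) (use cS ms in auto)
  then show ?thesis
  proof (rule eventually_mono)
    fix t assume h: "c ms + (\<Sum>m\<in>S-{ms}. c m * exp (- (E m t - E ms t))) \<noteq> 0"
    have "(\<Sum>m\<in>S. c m * exp (- E m t)) * exp (E ms t) \<noteq> 0" unfolding eq by (rule h)
    then have "(\<Sum>m\<in>S. c m * exp (- E m t)) \<noteq> 0" by auto
    then show "(\<Sum>m\<in>S. c m * exp (- Eexp n r m t)) \<noteq> 0" by (simp add: E_def)
  qed
qed



definition gfun :: "real \<Rightarrow> real" where
  "gfun x = (if x \<in> \<rat> then (1/2) ^ (to_nat_on \<rat> x) else 0)"

lemma inj_idx: "inj_on (to_nat_on \<rat>) (\<rat> :: real set)"
  using countable_rat by (rule inj_on_to_nat_on)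

lemma gfun_nonneg: "0 \<le> gfun x" by (simp add: gfun_def)
lemma gfun_le1: "gfun x \<le> 1" by (simp add: gfun_def power_le_one)
lemma gfun_pos: "x \<in> \<rat> \<Longrightarrow> 0 < gfun x" by (simp add: gfun_def)

lemma gfun_fin:
  assumes e: "e > 0" shows "finite {x. e \<le> gfun x}"
proof -
  obtain N where N: "(1/2::real) ^ N < e" using real_arch_pow_inv[OF e, of "1/2"] by auto
  define B :: "real set" where "B = {x \<in> \<rat>. to_nat_on \<rat> x < N}"
  have "{x. e \<le> gfun x} \<subseteq> B"
  proof
    fix x assume x: "x \<in> {x. e \<le> gfun x}"
    then have xq: "x \<in> \<rat>" using e by (auto simp: gfun_def split: if_splits)
    have "\<not> N \<le> to_nat_on \<rat> x"
    proof
      assume "N \<le> to_nat_on \<rat> x"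
      then have p: "(1/2::real) ^ to_nat_on \<rat> x \<le> (1/2) ^ N" by (rule power_decreasing) auto
      from x xq have "e \<le> (1/2) ^ to_nat_on \<rat> x" by (simp add: gfun_def)
      with p N show False by linarith
    qed
    then show "x \<in> B" using xq by (auto simp: B_def)
  qed
  moreover have "finite B"
  proof (rule finite_imageD)
    show "finite (to_nat_on \<rat> ` B)" by (rule finite_subset[of _ "{..<N}"]) (auto simp: B_def)
    show "inj_on (to_nat_on \<rat>) B" using inj_idx by (rule inj_on_subset) (auto simp: B_def)
  qed
  ultimately show ?thesis by (rule finite_subset)
qed

lemma geom_half: "(\<Sum>k<N. (1/2::real) ^ k) = 2 - 2 * (1/2) ^ N"
  by (induction N) auto

lemma gfun_sum:
  assumes fY: "finite Y" shows "(\<Sum>x\<in>Y. gfun x) \<le> 2"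
proof -
  have inj: "inj_on (to_nat_on \<rat>) (Y \<inter> \<rat>)" by (rule inj_on_subset[OF inj_idx]) blast
  have "(\<Sum>x\<in>Y. gfun x) = (\<Sum>x\<in>Y \<inter> \<rat>. gfun x)"
  proof (rule sum.mono_neutral_right[OF fY])
    show "Y \<inter> \<rat> \<subseteq> Y" by blast
    show "\<forall>i\<in>Y - Y \<inter> \<rat>. gfun i = 0" by (simp add: gfun_def)
  qed
  also have "\<dots> = (\<Sum>x\<in>Y \<inter> \<rat>. (1/2) ^ (to_nat_on \<rat> x))"
    by (rule sum.cong) (simp_all add: gfun_def)
  also have "\<dots> = (\<Sum>k\<in>to_nat_on \<rat> ` (Y \<inter> \<rat>). (1/2) ^ k)"
    using sum.reindex[OF inj, of "\<lambda>k. (1/2::real) ^ k"] by (simp add: o_def)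
  finally have eq: "(\<Sum>x\<in>Y. gfun x) = (\<Sum>k\<in>to_nat_on \<rat> ` (Y \<inter> \<rat>). (1/2) ^ k)" .
  obtain N where N: "to_nat_on \<rat> ` (Y \<inter> \<rat>) \<subseteq> {..<N}"
    using finite_nat_bounded[of "to_nat_on \<rat> ` (Y \<inter> \<rat>)"] fY by blast
  have "(\<Sum>k\<in>to_nat_on \<rat> ` (Y \<inter> \<rat>). (1/2::real) ^ k) \<le> (\<Sum>k<N. (1/2) ^ k)"
    by (rule sum_mono2[OF _ N]) simp_all
  also have "\<dots> \<le> 2" unfolding geom_half by simp
  finally show ?thesis using eq by simp
qed

lemma gfun_dense:
  assumes ab: "a < b" and d: "d > 0"
  shows "\<exists>x. a < x \<and> x < b \<and> x \<in> \<rat> \<and> gfun x < d"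
proof -
  define K where "K = {x. d \<le> gfun x}"
  have fK: "finite K" unfolding K_def by (rule gfun_fin[OF d])
  have op: "open ({a<..<b} - K)" using fK by (intro open_Diff finite_imp_closed) auto
  have ne: "{a<..<b} - K \<noteq> {}"
  proof
    assume "{a<..<b} - K = {}"
    then have "{a<..<b} \<subseteq> K" by auto
    then have "finite {a<..<b}" using fK by (rule finite_subset)
    then show False using infinite_Ioo[OF ab] by simp
  qed
  then obtain y where y: "y \<in> {a<..<b} - K" by blast
  obtain e where e: "e > 0" "ball y e \<subseteq> {a<..<b} - K"
    using op y open_contains_ball by blast
  obtain q where q: "q \<in> \<rat>" "y < q" "q < y + e" using Rats_dense_in_real[of y "y + e"] e by auto
  have "q \<in> ball y e" using q by (auto simp: dist_real_def)
  then have "q \<in> {a<..<b} - K" using e by auto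
  then show ?thesis using q by (auto simp: K_def)
qed

definition phi :: "real \<Rightarrow> real \<Rightarrow> real" where
  "phi r t = (if t \<le> 0 then 0 else exp (- (t powr (-r))))"

definition rho :: "real \<Rightarrow> real" where "rho a = exp a + 1"

lemma poly_exp_form:
  assumes t: "t > 0"
  shows "poly_eval n c (\<lambda>i. phi (r i) t) = (\<Sum>m\<in>{m. c m \<noteq> 0}. c m * exp (- Eexp n r m t))"
  unfolding poly_eval_def
proof (rule sum.cong[OF refl])
  fix m
  have "(\<Prod>i<n. phi (r i) t ^ m i) = (\<Prod>i<n. exp (real (m i) * (- (t powr (-r i)))))"
  proof (rule prod.cong[OF refl])
    fix i
    have "phi (r i) t ^ m i = exp (- (t powr (-r i))) ^ m i" using t by (simp add: phi_def)
    also have "\<dots> = exp (real (m i) * (- (t powr (-r i))))" by (rule exp_of_nat_mult[symmetric])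
    finally show "phi (r i) t ^ m i = exp (real (m i) * (- (t powr (-r i))))" .
  qed
  also have "\<dots> = exp (\<Sum>i<n. real (m i) * (- (t powr (-r i))))"
    by (simp add: exp_sum)
  also have "(\<Sum>i<n. real (m i) * (- (t powr (-r i)))) = - Eexp n r m t"
    unfolding Eexp_def by (simp add: sum_negf[symmetric])
  finally show "c m * (\<Prod>i<n. phi (r i) t ^ m i) = c m * exp (- Eexp n r m t)" by simp
qed

lemma mono_exp_le:
  assumes t: "0 < t" "t \<le> 1" and j: "j < n" "m j \<noteq> 0" and r: "\<And>i. 1 \<le> r i"
  shows "exp (- Eexp n r m t) \<le> t"
proof -
  have "real (m j) * t powr (-r j) \<le> Eexp n r m t"
    unfolding Eexp_def by (rule member_le_sum) (use j in auto)
  moreover have "t powr (-r j) \<le> real (m j) * t powr (-r j)"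
  proof -
    have "1 \<le> real (m j)" using j by simp
    from mult_right_mono[OF this, of "t powr (-r j)"] show ?thesis by simp
  qed
  moreover have "t powr (-1) \<le> t powr (-r j)"
    using r[of j] t by (intro powr_mono') auto
  moreover have "t powr (-1) = 1 / t" using t by (simp add: powr_neg_one)
  ultimately have E: "1 / t \<le> Eexp n r m t" by linarith
  have "exp (- Eexp n r m t) \<le> exp (- (1/t))" using E by simp
  also have "exp (- (1/t)) = 1 / exp (1/t)" by (simp add: exp_minus field_simps)
  also have "\<dots> \<le> 1 / (1 + 1/t)"
    using t by (intro divide_left_mono) (auto simp: add_pos_pos)
  also have "1 / (1 + 1/t) = t / (t + 1)" using t by (simp add: field_simps)
  also have "\<dots> \<le> t" using t by (simp add: field_simps)
  finally show ?thesis .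
qed

lemma Phi_bound:
  assumes P: "is_poly n c" and c0: "c (\<lambda>_. 0) = 0" and r: "\<And>i. 1 \<le> r i"
    and t: "0 \<le> t" "t \<le> 1"
  shows "\<bar>poly_eval n c (\<lambda>i. phi (r i) t)\<bar> \<le> (\<Sum>m\<in>{m. c m \<noteq> 0}. \<bar>c m\<bar>) * t"
proof -
  have ex: "\<exists>j<n. m j \<noteq> 0" if "c m \<noteq> 0" for m
  proof -
    have "\<exists>j. m j \<noteq> 0"
    proof (rule ccontr)
      assume "\<not> (\<exists>j. m j \<noteq> 0)"
      then have "m = (\<lambda>_. 0)" by (simp add: fun_eq_iff)
      with that c0 show False by simp
    qed
    then obtain j where mj: "m j \<noteq> 0" by blast
    have z: "\<forall>i\<ge>n. m i = 0" using conjunct2[OF P[unfolded is_poly_def]] that by simp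
    have "\<not> n \<le> j"
    proof
      assume "n \<le> j"
      with z have "m j = 0" by simp
      with mj show False by simp
    qed
    with mj show ?thesis by (intro exI[of _ j]) simp
  qed
  show ?thesis
  proof (cases "t = 0")
    case True
    have "poly_eval n c (\<lambda>i. phi (r i) t) = 0"
      unfolding poly_eval_def
    proof (rule sum.neutral, rule ballI)
      fix m assume "m \<in> {m. c m \<noteq> 0}"
      then obtain j where j: "j < n" "m j \<noteq> 0" using ex by blast
      have "(\<Prod>i<n. phi (r i) t ^ m i) = 0"
        by (rule prod_zero) (use j True in \<open>auto simp: phi_def\<close>)
      then show "c m * (\<Prod>i<n. phi (r i) t ^ m i) = 0" by simp
    qed
    then show ?thesis using True by simp
  next
    case False
    then have tp: "t > 0" using t by simp
    have "\<bar>poly_eval n c (\<lambda>i. phi (r i) t)\<bar> = \<bar>\<Sum>m\<in>{m. c m \<noteq> 0}. c m * exp (- Eexp n r m t)\<bar>"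
      using poly_exp_form[OF tp] by simp
    also have "\<dots> \<le> (\<Sum>m\<in>{m. c m \<noteq> 0}. \<bar>c m * exp (- Eexp n r m t)\<bar>)" by (rule sum_abs)
    also have "\<dots> \<le> (\<Sum>m\<in>{m. c m \<noteq> 0}. \<bar>c m\<bar> * t)"
    proof (rule sum_mono)
      fix m assume "m \<in> {m. c m \<noteq> 0}"
      then obtain j where j: "j < n" "m j \<noteq> 0" using ex by blast
      have "exp (- Eexp n r m t) \<le> t" by (rule mono_exp_le[where m=m and j=j, OF tp t(2) j r])
      then show "\<bar>c m * exp (- Eexp n r m t)\<bar> \<le> \<bar>c m\<bar> * t"
        by (simp add: abs_mult mult_left_mono)
    qed
    also have "\<dots> = (\<Sum>m\<in>{m. c m \<noteq> 0}. \<bar>c m\<bar>) * t" by (simp add: sum_distrib_right)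
    finally show ?thesis .
  qed
qed

lemma mono_part:
  fixes t :: "nat \<Rightarrow> real"
  assumes "\<forall>i<n. t i \<le> t (Suc i)" "i \<le> j" "j \<le> n"
  shows "t i \<le> t j"
  using assms(2,3)
proof (induction j)
  case 0 then show ?case by simp
next
  case (Suc j)
  show ?case
  proof (cases "i = Suc j")
    case True then show ?thesis by simp
  next
    case False
    then have "i \<le> j" using Suc by simp
    then have "t i \<le> t j" using Suc by simp
    also have "t j \<le> t (Suc j)" using assms(1) Suc by simp
    finally show ?thesis .
  qed
qed

lemma inj_sum_bound:
  fixes F :: "real \<Rightarrow> real"
  assumes b: "\<And>x. \<bar>F x\<bar> \<le> C * gfun x" and C: "C \<ge> 0" and I: "finite I" and inj: "inj_on f I"
  shows "(\<Sum>i\<in>I. \<bar>F (f i)\<bar>) \<le> 2 * C"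
proof -
  have "(\<Sum>i\<in>I. \<bar>F (f i)\<bar>) = (\<Sum>y\<in>f ` I. \<bar>F y\<bar>)"
    using sum.reindex[OF inj, of "\<lambda>y. \<bar>F y\<bar>"] by (simp add: o_def)
  also have "\<dots> \<le> (\<Sum>y\<in>f ` I. C * gfun y)" by (rule sum_mono) (rule b)
  also have "\<dots> = C * (\<Sum>y\<in>f ` I. gfun y)" by (simp add: sum_distrib_left)
  also have "\<dots> \<le> C * 2" using gfun_sum[of "f ` I"] I C by (intro mult_left_mono) auto
  finally show ?thesis by simp
qed

lemma bv_lemma:
  fixes F :: "real \<Rightarrow> real"
  assumes b: "\<And>x. \<bar>F x\<bar> \<le> C * gfun x" and C: "C \<ge> 0"
  shows "bounded_variation_on 0 1 F"
  unfolding bounded_variation_on_def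
proof (intro exI allI impI)
  fix n :: nat and t :: "nat \<Rightarrow> real"
  assume "t 0 = 0 \<and> t n = 1 \<and> (\<forall>i<n. t i \<le> t (Suc i))"
  then have mono: "\<forall>i<n. t i \<le> t (Suc i)" by blast
  define I where "I = {i. i < n \<and> t i \<noteq> t (Suc i)}"
  have fI: "finite I" unfolding I_def by simp
  have strict: "t (Suc i) < t (Suc i') \<and> t i < t i'" if "i \<in> I" "i' \<in> I" "i < i'" for i i'
  proof -
    have "t (Suc i) \<le> t i'" using mono_part[OF mono, of "Suc i" i'] that by (auto simp: I_def)
    moreover have "t i' < t (Suc i')" "t i < t (Suc i)" using that mono by (auto simp: I_def order_le_neq_trans)
    ultimately show ?thesis by linarith
  qed
  have inj1: "inj_on (\<lambda>i. t (Suc i)) I"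
    by (rule linorder_inj_onI) (use strict in force, auto)
  have inj2: "inj_on t I"
    by (rule linorder_inj_onI) (use strict in force, auto)
  have "(\<Sum>i<n. \<bar>F (t (Suc i)) - F (t i)\<bar>) = (\<Sum>i\<in>I. \<bar>F (t (Suc i)) - F (t i)\<bar>)"
  proof (rule sum.mono_neutral_right)
    show "finite {..<n}" by simp
    show "I \<subseteq> {..<n}" by (auto simp: I_def)
    show "\<forall>i\<in>{..<n} - I. \<bar>F (t (Suc i)) - F (t i)\<bar> = 0" by (auto simp: I_def)
  qed
  also have "\<dots> \<le> (\<Sum>i\<in>I. \<bar>F (t (Suc i))\<bar> + \<bar>F (t i)\<bar>)"
    by (rule sum_mono) (rule abs_triangle_ineq4)
  also have "\<dots> = (\<Sum>i\<in>I. \<bar>F (t (Suc i))\<bar>) + (\<Sum>i\<in>I. \<bar>F (t i)\<bar>)" by (rule sum.distrib)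
  also have "\<dots> \<le> 2 * C + 2 * C"
    using inj_sum_bound[OF b C fI inj1] inj_sum_bound[OF b C fI inj2] by linarith
  finally show "(\<Sum>i<n. \<bar>F (t (Suc i)) - F (t i)\<bar>) \<le> 4 * C" by simp
qed

lemma lim0:
  fixes F :: "real \<Rightarrow> real"
  assumes b: "\<And>x. \<bar>F x\<bar> \<le> C * gfun x" and C: "C \<ge> 0"
  shows "(F \<longlongrightarrow> 0) (at x)"
  unfolding tendsto_iff
proof (intro allI impI)
  fix e :: real assume e: "e > 0"
  define K where "K = {y. e / (C + 1) \<le> gfun y}"
  have "finite K" unfolding K_def by (rule gfun_fin) (use e C in simp)
  then have "\<not> x islimpt K" by (rule islimpt_finite)
  then have ev: "eventually (\<lambda>y. y \<notin> K) (at x)" by (simp add: islimpt_iff_eventually)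
  show "eventually (\<lambda>y. dist (F y) 0 < e) (at x)"
  proof (rule eventually_mono[OF ev])
    fix y assume "y \<notin> K"
    then have "gfun y < e / (C + 1)" by (simp add: K_def)
    then have "(C + 1) * gfun y < e" using C by (simp add: field_simps)
    moreover have "\<bar>F y\<bar> \<le> (C + 1) * gfun y" using b[of y] gfun_nonneg[of y] by (simp add: algebra_simps)
    ultimately show "dist (F y) 0 < e" by simp
  qed
qed

lemma jump_lemma:
  fixes F :: "real \<Rightarrow> real"
  assumes x: "x \<in> {0..1}" and Fx: "F x \<noteq> 0" and lim: "(F \<longlongrightarrow> 0) (at x)"
  shows "jump_discontinuity F x"
  unfolding jump_discontinuity_def
proof (intro conjI impI)
  show "x \<in> {0..1}" by (rule x)
  have l: "(F \<longlongrightarrow> 0) (at_left x)" "(F \<longlongrightarrow> 0) (at_right x)" using lim by (simp_all add: filterlim_at_split)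
  show "\<exists>l. (F \<longlongrightarrow> l) (at_left x)" using l(1) by blast
  show "\<exists>r. (F \<longlongrightarrow> r) (at_right x)" using l(2) by blast
  show "\<not> continuous (at x within {0..1}) F"
  proof
    assume "continuous (at x within {0..1}) F"
    then have l1: "(F \<longlongrightarrow> F x) (at x within {0..1})" by (simp add: continuous_within)
    have l2: "(F \<longlongrightarrow> 0) (at x within {0..1})" by (rule tendsto_within_subset[OF lim]) simp
    have "x islimpt {0..1::real}" using x by simp
    then have "at x within {0..1} \<noteq> bot" using trivial_limit_within by blast
    from tendsto_unique[OF this l1 l2] Fx show False by simp
  qed
qed

theorem mainTheorem7:
  shows "\<exists>z :: real \<Rightarrow> (real \<Rightarrow> real). inj z \<and>
     (\<forall>(n::nat) (\<alpha>::nat \<Rightarrow> real) (c::(nat \<Rightarrow> nat) \<Rightarrow> real).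
        inj_on \<alpha> {..<n} \<and> is_poly n c \<and> c (\<lambda>_. 0) = 0 \<and> (\<exists>m. c m \<noteq> 0) \<longrightarrow>
        (\<exists>x\<in>{0..1}. poly_eval n c (\<lambda>i. z (\<alpha> i) x) \<noteq> 0) \<and>
        (\<lambda>x. poly_eval n c (\<lambda>i. z (\<alpha> i) x)) \<in> classF)"
proof -
  define z where "z a x = phi (rho a) (gfun x)" for a x
  have main: "(\<exists>x\<in>{0..1}. poly_eval n c (\<lambda>i. z (\<alpha> i) x) \<noteq> 0) \<and>
        (\<lambda>x. poly_eval n c (\<lambda>i. z (\<alpha> i) x)) \<in> classF"
    if H: "inj_on \<alpha> {..<n} \<and> is_poly n c \<and> c (\<lambda>_. 0) = 0 \<and> (\<exists>m. c m \<noteq> 0)"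
    for n :: nat and \<alpha> :: "nat \<Rightarrow> real" and c :: "(nat \<Rightarrow> nat) \<Rightarrow> real"
  proof -
    from H have inj: "inj_on \<alpha> {..<n}" and P: "is_poly n c" and c0: "c (\<lambda>_. 0) = 0"
      and nz: "\<exists>m. c m \<noteq> 0" by blast+
    define r where "r i = rho (\<alpha> i)" for i
    have r1: "1 \<le> r i" for i by (simp add: r_def rho_def)
    have rpos: "0 < r i" for i using r1[of i] by linarith
    have rinj: "inj_on r {..<n}" using inj by (auto simp: inj_on_def r_def rho_def)
    define S where "S = {m. c m \<noteq> 0}"
    have fS: "finite S" using P by (simp add: is_poly_def S_def)
    have neS: "S \<noteq> {}" using nz by (auto simp: S_def)
    have cS: "\<And>m. m \<in> S \<Longrightarrow> c m \<noteq> 0" by (simp add: S_def)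
    have supp: "\<And>m i. m \<in> S \<Longrightarrow> i \<ge> n \<Longrightarrow> m i = 0"
      using conjunct2[OF P[unfolded is_poly_def]] by (simp add: S_def)
    define \<Phi> where "\<Phi> t = poly_eval n c (\<lambda>i. phi (r i) t)" for t
    have Fdef: "poly_eval n c (\<lambda>i. z (\<alpha> i) x) = \<Phi> (gfun x)" for x
      by (simp add: z_def \<Phi>_def r_def)
    have ev: "eventually (\<lambda>t. (\<Sum>m\<in>S. c m * exp (- Eexp n r m t)) \<noteq> 0) (at_right 0)"
      by (rule nonvanish[where S=S and c=c and n=n and r=r]) (simp_all add: fS neS cS supp rinj rpos)
    have ev2: "eventually (\<lambda>t. \<Phi> t \<noteq> 0) (at_right 0)"
    proof (rule eventually_mono[OF eventually_conj[OF ev eventually_at_right_less]])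
      fix t :: real assume "(\<Sum>m\<in>S. c m * exp (- Eexp n r m t)) \<noteq> 0 \<and> 0 < t"
      then show "\<Phi> t \<noteq> 0" using poly_exp_form[of t n c r] by (simp add: \<Phi>_def S_def)
    qed
    then obtain d :: real where d: "d > 0" "\<And>t. 0 < t \<Longrightarrow> t < d \<Longrightarrow> \<Phi> t \<noteq> 0"
      unfolding eventually_at_right_field by blast
    define C where "C = (\<Sum>m\<in>S. \<bar>c m\<bar>)"
    have C0: "C \<ge> 0" unfolding C_def by (rule sum_nonneg) simp
    have bnd: "\<bar>\<Phi> (gfun x)\<bar> \<le> C * gfun x" for x
      using Phi_bound[OF P c0 r1 gfun_nonneg gfun_le1] by (simp add: \<Phi>_def C_def S_def)
    have nzI: "\<exists>x. a < x \<and> x < b \<and> \<Phi> (gfun x) \<noteq> 0" if ab: "a < b" for a b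
    proof -
      obtain x where x: "a < x" "x < b" "x \<in> \<rat>" "gfun x < d" using gfun_dense[OF ab d(1)] by blast
      have "0 < gfun x" by (rule gfun_pos[OF x(3)])
      then have "\<Phi> (gfun x) \<noteq> 0" using d(2) x(4) by blast
      then show ?thesis using x by blast
    qed
    have lim: "((\<lambda>x. \<Phi> (gfun x)) \<longlongrightarrow> 0) (at y)" for y
      by (rule lim0[OF bnd C0])
    show ?thesis unfolding Fdef
    proof
      obtain x where "0 < x" "x < 1" "\<Phi> (gfun x) \<noteq> 0" using nzI[of 0 1] by auto
      then show "\<exists>x\<in>{0..1}. \<Phi> (gfun x) \<noteq> 0" by (intro bexI[of _ x]) auto
      show "(\<lambda>x. \<Phi> (gfun x)) \<in> classF" unfolding classF_def
      proof (intro CollectI conjI)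
        show "bounded_variation_on 0 1 (\<lambda>x. \<Phi> (gfun x))" by (rule bv_lemma[OF bnd C0])
        show "{0..1} \<subseteq> closure {x. jump_discontinuity (\<lambda>x. \<Phi> (gfun x)) x}"
        proof
          fix y :: real assume y: "y \<in> {0..1}"
          show "y \<in> closure {x. jump_discontinuity (\<lambda>x. \<Phi> (gfun x)) x}"
            unfolding closure_approachable
          proof (intro allI impI)
            fix e :: real assume e: "e > 0"
            define a where "a = max 0 (y - e)"
            define b where "b = min 1 (y + e)"
            have ab: "a < b" using y e unfolding a_def b_def by (cases "y = 0") auto
            obtain x where x: "a < x" "x < b" "\<Phi> (gfun x) \<noteq> 0" using nzI[OF ab] by blast
            have xI: "x \<in> {0..1}" using x unfolding a_def b_def by auto
            have "dist x y < e" using x unfolding a_def b_def dist_real_def by auto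
            moreover have "jump_discontinuity (\<lambda>x. \<Phi> (gfun x)) x"
              by (rule jump_lemma[OF xI x(3) lim])
            ultimately show "\<exists>x\<in>{x. jump_discontinuity (\<lambda>x. \<Phi> (gfun x)) x}. dist x y < e" by blast
          qed
        qed
      qed
    qed
  qed
  have injz: "inj z"
  proof (rule injI)
    fix a b assume zab: "z a = z b"
    obtain x where x: "0 < x" "x < 1" "x \<in> \<rat>" "gfun x < 1" using gfun_dense[of 0 1 1] by auto
    define t where "t = gfun x"
    have t: "0 < t" "t < 1" using x gfun_pos[OF x(3)] by (auto simp: t_def)
    have "phi (rho a) t = phi (rho b) t" using fun_cong[OF zab, of x] by (simp add: z_def t_def)
    then have "t powr (- rho a) = t powr (- rho b)" using t by (simp add: phi_def)
    then have "- rho a * ln t = - rho b * ln t" using t by (simp add: powr_def)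
    moreover have "ln t \<noteq> 0" using t by simp
    ultimately have "rho a = rho b" by simp
    then show "a = b" by (simp add: rho_def)
  qed
  show ?thesis
  proof (rule exI[of _ z], rule conjI)
    show "inj z" by (rule injz)
    show "\<forall>(n::nat) (\<alpha>::nat \<Rightarrow> real) (c::(nat \<Rightarrow> nat) \<Rightarrow> real).
        inj_on \<alpha> {..<n} \<and> is_poly n c \<and> c (\<lambda>_. 0) = 0 \<and> (\<exists>m. c m \<noteq> 0) \<longrightarrow>
        (\<exists>x\<in>{0..1}. poly_eval n c (\<lambda>i. z (\<alpha> i) x) \<noteq> 0) \<and>
        (\<lambda>x. poly_eval n c (\<lambda>i. z (\<alpha> i) x)) \<in> classF"
      by (intro allI impI) (erule main)
  qed
qed

end
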